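(* Let $D=\{(x,z):\ -1<z<0,\ -1<x<z+1\}$, and for $\lambda\in(\tfrac12,\tfrac45)$ let $a=\sqrt{\lambda/(1-\lambda)}$, $P(\lambda)=\{(x,z):\ a-3+\tfrac1a<z-\tfrac{x}{a}<1-a+\tfrac1a,\ 1-a-\tfrac1a<z+\tfrac{x}{a}<a-1-\tfrac1a\}$, $S(\lambda)=\partial P(\lambda)$, and $\chi(x,z,\lambda)$ the indicator of $P(\lambda)$ in $D$. Let $\tfrac12<\lambda_*<\lambda_{**}<\tfrac45$, $\sigma_0\in C^1[\tfrac12,\tfrac45]$, $$\psi(x,z,t)=\int_{\lambda_*}^{\lambda_{**}}\cos(\sqrt\lambda\,t)\,\sigma_0(\lambda)\chi(x,z,\lambda)\,d\lambda,$$ and define $\mathbf U=(u,v,w)$ by $u=-\psi_z$, $v(x,z,t)=\int_0^t\psi_z(x,z,s)\,ds$, $w=\psi_x$. Then $\mathbf U(x,z,t)=\mathbf 0$ for all $t$ and all $(x,z)$ in the open set $D\setminus\bigcup_{\mu\in[\lambda_*,\lambda_{**}]}S(\mu)$ (i.e. in each of the subdomains $D_9,\dots,D_{13}$).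
   Context: The boundaries $S(\lambda_* )$ and $S(\lambda_{**})$ divide $D$ into subdomains $D_1,\dots,D_{13}$; the subdomains $D_9,\dots,D_{13}$ are the connected components of $D\setminus\bigcup_{\mu\in[\lambda_*,\lambda_{**}]}S(\mu)$: $D_9$ is the inner region (contained in every $P(\mu)$), and $D_{10},\dots,D_{13}$ are the regions outside every $P(\mu)$, $\mu\in[\lambda_*,\lambda_{**}]$. $\mathbf U$ is the velocity field of the inertial wave (solution of the linearized rotating-fluid system $u_t=v-p_x$, $v_t=-u$, $w_t=-p_z$, $u_x+w_z=0$, $un_1+wn_3=0$ on $\partial D$) associated with the stream function $\psi$. *)

theory Defs
  imports "HOL-Analysis.Analysis"
begin

definition dom_D :: "(real \<times> real) set" where
  "dom_D = {(x, z). -1 < z \<and> z < 0 \<and> -1 < x \<and> x < z + 1}"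

definition a_of :: "real \<Rightarrow> real" where
  "a_of l = sqrt (l / (1 - l))"

definition P_set :: "real \<Rightarrow> (real \<times> real) set" where
  "P_set l = (let a = a_of l in
     {(x, z). a - 3 + 1/a < z - x/a \<and> z - x/a < 1 - a + 1/a \<and>
              1 - a - 1/a < z + x/a \<and> z + x/a < a - 1 - 1/a})"

definition S_set :: "real \<Rightarrow> (real \<times> real) set" where
  "S_set l = frontier (P_set l)"

text \<open>Indicator of P(lambda) (only evaluated on D).\<close>
definition chi :: "real \<Rightarrow> real \<Rightarrow> real \<Rightarrow> real" where
  "chi x z l = indicator (P_set l) (x, z)"

definition psi :: "real \<Rightarrow> real \<Rightarrow> (real \<Rightarrow> real) \<Rightarrow> real \<Rightarrow> real \<Rightarrow> real \<Rightarrow> real" where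
  "psi ls lss \<sigma>0 x z t = integral {ls..lss} (\<lambda>l. cos (sqrt l * t) * \<sigma>0 l * chi x z l)"

definition psi_z :: "real \<Rightarrow> real \<Rightarrow> (real \<Rightarrow> real) \<Rightarrow> real \<Rightarrow> real \<Rightarrow> real \<Rightarrow> real" where
  "psi_z ls lss \<sigma>0 x z t = deriv (\<lambda>z'. psi ls lss \<sigma>0 x z' t) z"

definition psi_x :: "real \<Rightarrow> real \<Rightarrow> (real \<Rightarrow> real) \<Rightarrow> real \<Rightarrow> real \<Rightarrow> real \<Rightarrow> real" where
  "psi_x ls lss \<sigma>0 x z t = deriv (\<lambda>x'. psi ls lss \<sigma>0 x' z t) x"

text \<open>Velocity field U = (u, v, w); v uses the oriented integral from 0 to t.\<close>
definition U_field :: "real \<Rightarrow> real \<Rightarrow> (real \<Rightarrow> real) \<Rightarrow> real \<Rightarrow> real \<Rightarrow> real \<Rightarrow> real \<times> real \<times> real" where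
  "U_field ls lss \<sigma>0 x z t =
     (- psi_z ls lss \<sigma>0 x z t,
      (LBINT s=0..t. psi_z ls lss \<sigma>0 x z s),
      psi_x ls lss \<sigma>0 x z t)"

end

theory Submission imports Defs begin

definition Qs :: "real \<Rightarrow> (real \<times> real) set" where
  "Qs a = {(x, z). a - 3 + 1/a < z - x/a \<and> z - x/a < 1 - a + 1/a \<and>
              1 - a - 1/a < z + x/a \<and> z + x/a < a - 1 - 1/a}"

lemma P_set_Q: "P_set l = Qs (a_of l)"
  by (simp add: P_set_def Qs_def Let_def)

lemma a_of_bounds:
  assumes "1/2 < l" "l < 4/5" shows "1 < a_of l" "a_of l < 2"
proof -
  have "1 < l / (1 - l)" using assms by (simp add: field_simps)
  then show "1 < a_of l" unfolding a_of_def by simp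
  have "l / (1 - l) < 4" using assms by (simp add: field_simps)
  then have "sqrt (l / (1 - l)) < sqrt 4" by (rule real_sqrt_less_mono)
  then show "a_of l < 2" unfolding a_of_def by simp
qed

lemma conv_lo: "(lo::real) \<le> u \<Longrightarrow> lo < w0 \<Longrightarrow> 0 < t \<Longrightarrow> t \<le> 1 \<Longrightarrow> lo < (1-t)*u + t*w0"
proof -
  assume h: "lo \<le> u" "lo < w0" "0 < t" "t \<le> 1"
  have "(1-t)*lo \<le> (1-t)*u" using h by (intro mult_left_mono) auto
  moreover have "t*lo < t*w0" using h by simp
  ultimately show ?thesis by (simp add: algebra_simps)
qed

lemma conv_hi: "u \<le> (hi::real) \<Longrightarrow> w0 < hi \<Longrightarrow> 0 < t \<Longrightarrow> t \<le> 1 \<Longrightarrow> (1-t)*u + t*w0 < hi"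
  using conv_lo[of "-hi" "-u" "-w0" t] by (simp add: algebra_simps)

lemma closure_Q:
  fixes a x z :: real
  assumes a: "1 < a" "a < 2"
    and h: "a-3+1/a \<le> z - x/a" "z-x/a \<le> 1-a+1/a" "1-a-1/a \<le> z+x/a" "z+x/a \<le> a-1-1/a"
  shows "(x, z) \<in> closure (Qs a)"
  unfolding closure_approachable
proof (intro allI impI)
  fix e :: real assume e: "e > 0"
  define p where "p = (x, z)"
  define q0 where "q0 = ((a-2)/2, -1/2::real)"
  define n where "n = norm (q0 - p)"
  define t where "t = min 1 (e / (2*(n+1)))"
  have n0: "n \<ge> 0" by (simp add: n_def)
  have t0: "0 < t" "t \<le> 1" using e n0 by (auto simp: t_def)
  have "t * n \<le> (e / (2*(n+1))) * n" using n0 by (intro mult_right_mono) (auto simp: t_def)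
  also have "\<dots> < e" using e n0 mult_nonneg_nonneg[of e n] by (simp add: field_simps) (smt (verit) mult_nonneg_nonneg)
  finally have tn: "t * n < e" .
  define y where "y = p + t *\<^sub>R (q0 - p)"
  have "dist y p = t * n" by (simp add: y_def dist_norm n_def abs_of_pos[OF t0(1)])
  with tn have d: "dist y p < e" by simp
  have a0: "a \<noteq> 0" using a by simp
  have u: "snd y - fst y / a = (1-t)*(z - x/a) + t*(1/a - 1)"
    by (simp add: y_def p_def q0_def field_simps a0)
  have r: "snd y + fst y / a = (1-t)*(z + x/a) + t*(- 1/a)"
    by (simp add: y_def p_def q0_def field_simps a0)
  have i1: "a-3+1/a < snd y - fst y / a" unfolding u
    by (rule conv_lo[OF h(1) _ t0]) (use a in simp)
  have i2: "snd y - fst y / a < 1-a+1/a" unfolding u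
    by (rule conv_hi[OF h(2) _ t0]) (use a in simp)
  have i3: "1-a-1/a < snd y + fst y / a" unfolding r
    by (rule conv_lo[OF h(3) _ t0]) (use a in simp)
  have i4: "snd y + fst y / a < a-1-1/a" unfolding r
    by (rule conv_hi[OF h(4) _ t0]) (use a in simp)
  have "y \<in> Qs a" using i1 i2 i3 i4 by (simp add: Qs_def case_prod_unfold)
  then show "\<exists>y\<in>Qs a. dist y (x, z) < e" using d p_def by blast
qed


lemma notfront:
  fixes a x z :: real
  assumes a: "1 < a" "a < 2" and nf: "(x, z) \<notin> frontier (Qs a)" and nq: "(x, z) \<notin> Qs a"
  shows "z - x/a < a-3+1/a \<or> 1-a+1/a < z-x/a \<or> z+x/a < 1-a-1/a \<or> a-1-1/a < z+x/a"
proof (rule ccontr)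
  assume "\<not> ?thesis"
  then have "(x, z) \<in> closure (Qs a)" by (intro closure_Q a) (auto simp: not_less)
  moreover have "(x, z) \<notin> interior (Qs a)" using nq interior_subset by blast
  ultimately show False using nf by (simp add: frontier_def)
qed

definition "g1 a x z = (z - x/a) - (a - 3 + 1/a)"
definition "g2 a x z = (1 - a + 1/a) - (z - x/a)"
definition "g3 a x z = (z + x/a) - (1 - a - 1/a)"
definition "g4 a x z = (a - 1 - 1/a) - (z + x/a)"

lemma Qs_iff: "(x, z) \<in> Qs a \<longleftrightarrow> g1 a x z > 0 \<and> g2 a x z > 0 \<and> g3 a x z > 0 \<and> g4 a x z > 0"
  by (simp add: Qs_def g1_def g2_def g3_def g4_def)

lemma cont_g:
  fixes A X Z :: "'b::t2_space \<Rightarrow> real"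
  assumes "isCont A y0" "isCont X y0" "isCont Z y0" "A y0 \<noteq> 0"
  shows "isCont (\<lambda>y. g1 (A y) (X y) (Z y)) y0" "isCont (\<lambda>y. g2 (A y) (X y) (Z y)) y0"
        "isCont (\<lambda>y. g3 (A y) (X y) (Z y)) y0" "isCont (\<lambda>y. g4 (A y) (X y) (Z y)) y0"
  unfolding g1_def g2_def g3_def g4_def using assms by (auto intro!: continuous_intros)

lemma ev_pos: "isCont f y0 \<Longrightarrow> (f y0::real) > 0 \<Longrightarrow> eventually (\<lambda>y. f y > 0) (nhds y0)"
  unfolding isCont_def tendsto_at_iff_tendsto_nhds by (rule order_tendstoD(1))

lemma ev_neg: "isCont f y0 \<Longrightarrow> (f y0::real) < 0 \<Longrightarrow> eventually (\<lambda>y. f y < 0) (nhds y0)"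
  unfolding isCont_def tendsto_at_iff_tendsto_nhds by (rule order_tendstoD(2))

lemma isCont_a: "1/2 < l \<Longrightarrow> l < 4/5 \<Longrightarrow> isCont a_of l"
  unfolding a_of_def by (auto intro!: continuous_intros)

lemma local_at:
  assumes l: "1/2 < \<mu>0" "\<mu>0 < 4/5" and nS: "p \<notin> S_set \<mu>0"
  shows "\<exists>d>0. \<forall>\<mu> q. dist \<mu> \<mu>0 < d \<longrightarrow> dist q p < d \<longrightarrow> (q \<in> P_set \<mu> \<longleftrightarrow> p \<in> P_set \<mu>)"
proof -
  obtain x z where p: "p = (x, z)" by (cases p)
  define y0 where "y0 = (\<mu>0, p)"
  have cA: "isCont (\<lambda>y::real\<times>real\<times>real. a_of (fst y)) y0"
    using l by (intro isCont_o2[OF _ isCont_a]) (auto simp: y0_def intro!: continuous_intros)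
  have cX: "isCont (\<lambda>y::real\<times>real\<times>real. fst (snd y)) y0" "isCont (\<lambda>y::real\<times>real\<times>real. snd (snd y)) y0"
    "isCont (\<lambda>y::real\<times>real\<times>real. x) y0" "isCont (\<lambda>y::real\<times>real\<times>real. z) y0"
    by (auto intro!: continuous_intros)
  have ab: "1 < a_of \<mu>0" "a_of \<mu>0 < 2" using a_of_bounds l by auto
  have a0: "a_of (fst y0) \<noteq> 0" using ab by (simp add: y0_def)
  note cq = cont_g[OF cA cX(1) cX(2) a0]
  note cp = cont_g[OF cA cX(3) cX(4) a0]
  have ev: "eventually (\<lambda>y. snd y \<in> P_set (fst y) \<longleftrightarrow> p \<in> P_set (fst y)) (nhds y0)"
  proof (cases "p \<in> P_set \<mu>0")
    case True
    then have pos: "g1 (a_of \<mu>0) x z > 0" "g2 (a_of \<mu>0) x z > 0" "g3 (a_of \<mu>0) x z > 0" "g4 (a_of \<mu>0) x z > 0"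
      by (auto simp: P_set_Q p Qs_iff)
    have "eventually (\<lambda>y. g1 (a_of (fst y)) (fst (snd y)) (snd (snd y)) > 0 \<and>
       g2 (a_of (fst y)) (fst (snd y)) (snd (snd y)) > 0 \<and>
       g3 (a_of (fst y)) (fst (snd y)) (snd (snd y)) > 0 \<and>
       g4 (a_of (fst y)) (fst (snd y)) (snd (snd y)) > 0 \<and>
       g1 (a_of (fst y)) x z > 0 \<and> g2 (a_of (fst y)) x z > 0 \<and>
       g3 (a_of (fst y)) x z > 0 \<and> g4 (a_of (fst y)) x z > 0) (nhds y0)"
      using pos by (intro eventually_conj ev_pos cq cp) (auto simp: y0_def p)
    then show ?thesis
      by eventually_elim (auto simp: P_set_Q p Qs_iff case_prod_unfold)
  next
    case False
    have nf: "(x, z) \<notin> frontier (Qs (a_of \<mu>0))" using nS by (simp add: S_set_def P_set_Q p)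
    have nq: "(x, z) \<notin> Qs (a_of \<mu>0)" using False by (simp add: P_set_Q p)
    from notfront[OF ab nf nq]
    have "g1 (a_of \<mu>0) x z < 0 \<or> g2 (a_of \<mu>0) x z < 0 \<or> g3 (a_of \<mu>0) x z < 0 \<or> g4 (a_of \<mu>0) x z < 0"
      by (auto simp: g1_def g2_def g3_def g4_def)
    then show ?thesis
    proof (elim disjE)
      assume n: "g1 (a_of \<mu>0) x z < 0"
      have "eventually (\<lambda>y. g1 (a_of (fst y)) (fst (snd y)) (snd (snd y)) < 0 \<and> g1 (a_of (fst y)) x z < 0) (nhds y0)"
        using n by (intro eventually_conj ev_neg cq cp) (auto simp: y0_def p)
      then show ?thesis by eventually_elim (auto simp: P_set_Q p Qs_iff case_prod_unfold)
    next
      assume n: "g2 (a_of \<mu>0) x z < 0"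
      have "eventually (\<lambda>y. g2 (a_of (fst y)) (fst (snd y)) (snd (snd y)) < 0 \<and> g2 (a_of (fst y)) x z < 0) (nhds y0)"
        using n by (intro eventually_conj ev_neg cq cp) (auto simp: y0_def p)
      then show ?thesis by eventually_elim (auto simp: P_set_Q p Qs_iff case_prod_unfold)
    next
      assume n: "g3 (a_of \<mu>0) x z < 0"
      have "eventually (\<lambda>y. g3 (a_of (fst y)) (fst (snd y)) (snd (snd y)) < 0 \<and> g3 (a_of (fst y)) x z < 0) (nhds y0)"
        using n by (intro eventually_conj ev_neg cq cp) (auto simp: y0_def p)
      then show ?thesis by eventually_elim (auto simp: P_set_Q p Qs_iff case_prod_unfold)
    next
      assume n: "g4 (a_of \<mu>0) x z < 0"
      have "eventually (\<lambda>y. g4 (a_of (fst y)) (fst (snd y)) (snd (snd y)) < 0 \<and> g4 (a_of (fst y)) x z < 0) (nhds y0)"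
        using n by (intro eventually_conj ev_neg cq cp) (auto simp: y0_def p)
      then show ?thesis by eventually_elim (auto simp: P_set_Q p Qs_iff case_prod_unfold)
    qed
  qed
  then obtain d where d: "d > 0" "\<And>y. dist y y0 < d \<Longrightarrow> (snd y \<in> P_set (fst y) \<longleftrightarrow> p \<in> P_set (fst y))"
    unfolding eventually_nhds_metric by blast
  show ?thesis
  proof (intro exI[of _ "d/2"] conjI allI impI)
    show "d/2 > 0" using d by simp
    fix \<mu> q assume h: "dist \<mu> \<mu>0 < d/2" "dist q p < d/2"
    have "dist (\<mu>, q) y0 \<le> \<bar>dist \<mu> \<mu>0\<bar> + \<bar>dist q p\<bar>"
      unfolding y0_def dist_Pair_Pair by (rule sqrt_sum_squares_le_sum_abs)
    also have "\<dots> < d" using h by simp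
    finally show "q \<in> P_set \<mu> \<longleftrightarrow> p \<in> P_set \<mu>" using d(2)[of "(\<mu>, q)"] by simp
  qed
qed


lemma local_const:
  assumes l: "1/2 < ls" "lss < 4/5" and nS: "\<forall>\<mu>\<in>{ls..lss}. p \<notin> S_set \<mu>"
  shows "\<exists>e>0. \<forall>q. dist q p < e \<longrightarrow> (\<forall>\<mu>\<in>{ls..lss}. (q \<in> P_set \<mu> \<longleftrightarrow> p \<in> P_set \<mu>))"
proof -
  have "\<forall>\<mu>0\<in>{ls..lss}. \<exists>d>0. \<forall>\<mu> q. dist \<mu> \<mu>0 < d \<longrightarrow> dist q p < d \<longrightarrow> (q \<in> P_set \<mu> \<longleftrightarrow> p \<in> P_set \<mu>)"
    using local_at l nS by auto
  then obtain d where d: "\<And>\<mu>0. \<mu>0\<in>{ls..lss} \<Longrightarrow> d \<mu>0 > 0 \<and> (\<forall>\<mu> q. dist \<mu> \<mu>0 < d \<mu>0 \<longrightarrow> dist q p < d \<mu>0 \<longrightarrow> (q \<in> P_set \<mu> \<longleftrightarrow> p \<in> P_set \<mu>))"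
    by metis
  have cov: "{ls..lss} \<subseteq> (\<Union>c\<in>{ls..lss}. ball c (d c))"
    using d by force
  obtain F where F: "F \<subseteq> {ls..lss}" "finite F" "{ls..lss} \<subseteq> (\<Union>c\<in>F. ball c (d c))"
    using compactE_image[OF compact_Icc _ cov] by blast
  define e where "e = Min (insert 1 (d ` F))"
  have e0: "e > 0" unfolding e_def using F d by (auto simp: Min_gr_iff)
  have ed: "\<And>c. c \<in> F \<Longrightarrow> e \<le> d c" unfolding e_def using F by auto
  show ?thesis
  proof (intro exI[of _ e] conjI allI impI ballI)
    show "e > 0" by (rule e0)
    fix q \<mu> assume q: "dist q p < e" and m: "\<mu> \<in> {ls..lss}"
    then obtain c where c: "c \<in> F" "\<mu> \<in> ball c (d c)" using F by blast
    have "dist \<mu> c < d c" using c by (simp add: dist_commute)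
    moreover have "dist q p < d c" using q ed[OF c(1)] by simp
    ultimately show "q \<in> P_set \<mu> \<longleftrightarrow> p \<in> P_set \<mu>" using d[of c] c F by blast
  qed
qed

theorem theorem3p1:
  fixes ls lss :: real and \<sigma>0 :: "real \<Rightarrow> real"
  assumes "1/2 < ls" and "ls < lss" and "lss < 4/5"
    and "\<sigma>0 C1_differentiable_on {1/2..4/5}"
  shows "\<forall>t x z. (x, z) \<in> dom_D - (\<Union>\<mu>\<in>{ls..lss}. S_set \<mu>) \<longrightarrow>
           U_field ls lss \<sigma>0 x z t = (0, 0, 0)"
proof (intro allI impI)
  fix t x z assume mem: "(x, z) \<in> dom_D - (\<Union>\<mu>\<in>{ls..lss}. S_set \<mu>)"
  then have nS: "\<forall>\<mu>\<in>{ls..lss}. (x, z) \<notin> S_set \<mu>" by blast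
  obtain e where e: "e > 0" "\<And>q. dist q (x, z) < e \<Longrightarrow> (\<forall>\<mu>\<in>{ls..lss}. (q \<in> P_set \<mu> \<longleftrightarrow> (x, z) \<in> P_set \<mu>))"
    using local_const[OF assms(1) assms(3) nS] by blast
  have psi_eq: "psi ls lss \<sigma>0 x' z' s = psi ls lss \<sigma>0 x z s" if "dist (x', z') (x, z) < e" for x' z' s
    unfolding psi_def chi_def
    by (rule integral_cong) (use e(2)[OF that] in \<open>auto simp: indicator_def\<close>)
  have pz: "psi_z ls lss \<sigma>0 x z s = 0" for s
  proof -
    have "((\<lambda>z'. psi ls lss \<sigma>0 x z' s) has_field_derivative 0) (at z)"
    proof (rule has_field_derivative_transform_within_open[where S="ball z e"])
      show "((\<lambda>_. psi ls lss \<sigma>0 x z s) has_field_derivative 0) (at z)" by simp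
      show "open (ball z e)" by simp
      show "z \<in> ball z e" using e by simp
      fix z' assume "z' \<in> ball z e"
      then have "dist (x, z') (x, z) < e" by (simp add: dist_Pair_Pair dist_commute)
      then show "psi ls lss \<sigma>0 x z s = psi ls lss \<sigma>0 x z' s" using psi_eq by simp
    qed
    then show ?thesis unfolding psi_z_def by (rule DERIV_imp_deriv)
  qed
  have px: "psi_x ls lss \<sigma>0 x z t = 0"
  proof -
    have "((\<lambda>x'. psi ls lss \<sigma>0 x' z t) has_field_derivative 0) (at x)"
    proof (rule has_field_derivative_transform_within_open[where S="ball x e"])
      show "((\<lambda>_. psi ls lss \<sigma>0 x z t) has_field_derivative 0) (at x)" by simp
      show "open (ball x e)" by simp
      show "x \<in> ball x e" using e by simp
      fix x' assume "x' \<in> ball x e"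
      then have "dist (x', z) (x, z) < e" by (simp add: dist_Pair_Pair dist_commute)
      then show "psi ls lss \<sigma>0 x z t = psi ls lss \<sigma>0 x' z t" using psi_eq by simp
    qed
    then show ?thesis unfolding psi_x_def by (rule DERIV_imp_deriv)
  qed
  show "U_field ls lss \<sigma>0 x z t = (0, 0, 0)"
  proof -
    have f0: "psi_z ls lss \<sigma>0 x z = (\<lambda>s. 0)" using pz by (intro ext)
    show ?thesis unfolding U_field_def f0 using pz px
      by (simp add: interval_lebesgue_integral_def set_lebesgue_integral_def)
  qed
qed

end
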